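(* $\mathrm{SLT}_1\subsetneq\mathrm{REG}_5^Z$.
   Context: Strictly locally testable languages: let $V$ be an alphabet and $k\ge1$. For $B,I,E\subseteq V^k$ and $F\subseteq V^{\le k-1}$, $\mathrm{slt}(B,I,E,F)$ is the language over $V$ consisting of all words in $F$ together with all words $a_1\cdots a_n$ ($a_i\in V$, $n\ge k$) with $a_1\cdots a_k\in B$, $a_{j+1}\cdots a_{j+k}\in I$ for all $1\le j\le n-k-1$, and $a_{n-k+1}\cdots a_n\in E$. $\mathrm{SLT}_k$ is the family of languages of this form (strictly locally $k$-testable languages). For a regular language $L\subseteq V^*$, $\mathrm{State}(L)$ is the minimum number of states of a deterministic finite automaton $(V,Z,z_0,F,\delta)$ with total transition function $\delta:Z\times V\to Z$ accepting $L$; $\mathrm{REG}_n^Z=\{L\text{ regular}:\mathrm{State}(L)\le n\}$. *)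

theory Defs
  imports Main
begin

definition alphabet :: "'a set \<Rightarrow> bool" where
  "alphabet V \<longleftrightarrow> finite V \<and> V \<noteq> {}"

text \<open>Strictly locally k-testable language slt(B,I,E,F) over V.
  For a word a_1...a_n (n >= k): prefix of length k in B, the windows
  a_{j+1}...a_{j+k} for 1 <= j <= n-k-1 in I, suffix of length k in E.\<close>
definition slt :: "'a set \<Rightarrow> nat \<Rightarrow> 'a list set \<Rightarrow> 'a list set \<Rightarrow> 'a list set
                    \<Rightarrow> 'a list set \<Rightarrow> 'a list set" where
  "slt V k B I E F = F \<union>
     {w \<in> lists V. k \<le> length w \<and> take k w \<in> B
        \<and> (\<forall>j. 1 \<le> j \<and> j + k + 1 \<le> length w \<longrightarrow> take k (drop j w) \<in> I)
        \<and> drop (length w - k) w \<in> E}"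

definition SLT :: "'a set \<Rightarrow> nat \<Rightarrow> 'a list set set" where
  "SLT V k = {L. \<exists>B I E F.
      B \<subseteq> {w \<in> lists V. length w = k} \<and> I \<subseteq> {w \<in> lists V. length w = k} \<and>
      E \<subseteq> {w \<in> lists V. length w = k} \<and> F \<subseteq> {w \<in> lists V. length w \<le> k - 1} \<and>
      L = slt V k B I E F}"

text \<open>States are taken to be natural numbers (any finite state set
  can be renamed into nat, so this does not affect state counts).\<close>
definition is_dfa :: "'a set \<Rightarrow> nat set \<Rightarrow> nat \<Rightarrow> nat set \<Rightarrow> (nat \<Rightarrow> 'a \<Rightarrow> nat) \<Rightarrow> bool" where
  "is_dfa V Z z0 Fin \<delta> \<longleftrightarrow> finite Z \<and> z0 \<in> Z \<and> Fin \<subseteq> Z \<and>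
     (\<forall>z\<in>Z. \<forall>a\<in>V. \<delta> z a \<in> Z)"

definition dfa_lang :: "'a set \<Rightarrow> nat \<Rightarrow> nat set \<Rightarrow> (nat \<Rightarrow> 'a \<Rightarrow> nat) \<Rightarrow> 'a list set" where
  "dfa_lang V z0 Fin \<delta> = {w \<in> lists V. foldl \<delta> z0 w \<in> Fin}"

definition regular :: "'a set \<Rightarrow> 'a list set \<Rightarrow> bool" where
  "regular V L \<longleftrightarrow> (\<exists>Z z0 Fin \<delta>. is_dfa V Z z0 Fin \<delta> \<and> L = dfa_lang V z0 Fin \<delta>)"

definition State :: "'a set \<Rightarrow> 'a list set \<Rightarrow> nat" where
  "State V L = (LEAST n. \<exists>Z z0 Fin \<delta>. is_dfa V Z z0 Fin \<delta> \<and> card Z = n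
                             \<and> L = dfa_lang V z0 Fin \<delta>)"

definition REG_Z :: "'a set \<Rightarrow> nat \<Rightarrow> 'a list set set" where
  "REG_Z V n = {L. L \<subseteq> lists V \<and> regular V L \<and> State V L \<le> n}"

end

theory Submission
  imports Defs
begin

definition st :: "bool \<Rightarrow> bool \<Rightarrow> nat" where
  "st p e = (if p then (if e then 1 else 2) else (if e then 3 else 4))"

definition dd :: "'a list set \<Rightarrow> 'a list set \<Rightarrow> 'a list set \<Rightarrow> nat \<Rightarrow> 'a \<Rightarrow> nat" where
  "dd B I E q x = (if q = 0 then (if [x] \<in> B then st True ([x] \<in> E) else 4)
                   else if q \<le> 2 then st ([x] \<in> I) ([x] \<in> E) else 4)"

definition mid :: "'a list set \<Rightarrow> 'a list \<Rightarrow> bool" where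
  "mid I w = (\<forall>i. Suc i < length w \<longrightarrow> [w!i] \<in> I)"

lemma dd_range: "dd B I E q x \<in> {0..4}"
  by (simp add: dd_def st_def)

lemma fold4: "foldl (dd B I E) 4 w = 4"
  by (induction w) (auto simp: dd_def)

lemma fold3: "w \<noteq> [] \<Longrightarrow> foldl (dd B I E) 3 w = 4"
  by (cases w) (auto simp: dd_def fold4)

lemma fold_nz: "q \<noteq> 0 \<Longrightarrow> foldl (dd B I E) q w \<noteq> 0"
  by (induction w arbitrary: q) (auto simp: dd_def st_def)

lemma mid_Cons: "w \<noteq> [] \<Longrightarrow> mid I (b # w) = ([b] \<in> I \<and> mid I w)"
  unfolding mid_def
  apply (cases w)
   apply simp
  by (auto simp: nth_Cons split: nat.splits)

lemma lemA: "q \<in> {1,2} \<Longrightarrow> (foldl (dd B I E) q w \<in> {1,3}) =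
   (if w = [] then q = 1 else mid I w \<and> [last w] \<in> E)"
proof (induction w arbitrary: q)
  case Nil
  then show ?case by auto
next
  case (Cons b w)
  show ?case
  proof (cases "w = []")
    case True
    then show ?thesis using Cons.prems by (auto simp: dd_def st_def mid_def)
  next
    case False
    show ?thesis
    proof (cases "[b] \<in> I")
      case True
      have "dd B I E q b \<in> {1,2}" using Cons.prems True by (auto simp: dd_def st_def)
      then show ?thesis using Cons.IH[of "dd B I E q b"] False True mid_Cons[OF False]
        by simp
    next
      case nI: False
      have "dd B I E q b \<in> {3,4}" using Cons.prems nI by (auto simp: dd_def st_def)
      then have "foldl (dd B I E) (dd B I E q b) w = 4" using fold3[OF False] fold4 by auto
      then show ?thesis using False nI mid_Cons[OF False] by simp
    qed
  qed
qed

lemma take1: "j < length w \<Longrightarrow> take 1 (drop j w) = [w!j]"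
  by (simp add: Cons_nth_drop_Suc[symmetric])

lemma droplast: "w \<noteq> [] \<Longrightarrow> drop (length w - 1) w = [last w]"
  by (simp add: Cons_nth_drop_Suc[symmetric] last_conv_nth)

lemma mid_conv: "(\<forall>j. 1 \<le> j \<and> j + 1 + 1 \<le> length (x # w) \<longrightarrow> take 1 (drop j (x # w)) \<in> I)
   = mid I w"
  unfolding mid_def
proof (intro iffI allI impI)
  fix i assume A: "\<forall>j. 1 \<le> j \<and> j + 1 + 1 \<le> length (x # w) \<longrightarrow> take 1 (drop j (x # w)) \<in> I"
    and "Suc i < length w"
  have "1 \<le> Suc i \<and> Suc i + 1 + 1 \<le> length (x # w)" using \<open>Suc i < length w\<close> by simp
  then have "take 1 (drop (Suc i) (x # w)) \<in> I" using A by blast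
  then show "[w!i] \<in> I" using \<open>Suc i < length w\<close> take1[of i w] by simp
next
  fix j assume A: "\<forall>i. Suc i < length w \<longrightarrow> [w ! i] \<in> I" and B: "1 \<le> j \<and> j + 1 + 1 \<le> length (x # w)"
  then obtain i where "j = Suc i" by (cases j) auto
  then show "take 1 (drop j (x # w)) \<in> I" using A B take1[of i w] by simp
qed

lemma slt_lang:
  assumes F: "F \<subseteq> {w \<in> lists V. length w \<le> 1 - 1}"
  shows "slt V 1 B I E F = dfa_lang V 0 ({q. q = 0 \<and> [] \<in> F} \<union> {1,3}) (dd B I E)"
proof (intro set_eqI)
  fix w
  show "w \<in> slt V 1 B I E F \<longleftrightarrow> w \<in> dfa_lang V 0 ({q. q = 0 \<and> [] \<in> F} \<union> {1,3}) (dd B I E)"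
  proof (cases w)
    case Nil
    then show ?thesis by (auto simp: slt_def dfa_lang_def)
  next
    case (Cons x w')
    have nF: "w \<notin> F" using F Cons by auto
    have fd: "foldl (dd B I E) 0 w = foldl (dd B I E) (dd B I E 0 x) w'" using Cons by simp
    show ?thesis
    proof (cases "[x] \<in> B")
      case True
      have q: "dd B I E 0 x \<in> {1,2}" "dd B I E 0 x = 1 \<longleftrightarrow> [x] \<in> E"
        using True by (auto simp: dd_def st_def)
      have nz: "foldl (dd B I E) 0 w \<noteq> 0" using fd fold_nz q(1) by (metis empty_iff insert_iff zero_neq_one
            numeral_2_eq_2 nat.distinct(1))
      have dr: "drop (length (x#w') - 1) (x#w') = [last (x#w')]" by (rule droplast) simp
      have "w \<in> slt V 1 B I E F \<longleftrightarrow> w \<in> lists V \<and> mid I w' \<and> [last (x#w')] \<in> E"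
        using nF True Cons dr mid_conv[where x=x and w=w' and I=I] by (simp add: slt_def)
      also have "\<dots> \<longleftrightarrow> w \<in> lists V \<and> foldl (dd B I E) 0 w \<in> {1,3}"
        using lemA[OF q(1), where w=w' and I=I] fd q(2) by (cases "w' = []") (auto simp: mid_def)
      also have "\<dots> \<longleftrightarrow> w \<in> dfa_lang V 0 ({q. q = 0 \<and> [] \<in> F} \<union> {1,3}) (dd B I E)"
        using nz by (auto simp: dfa_lang_def)
      finally show ?thesis .
    next
      case False
      have "foldl (dd B I E) 0 w = 4" using fd False by (simp add: dd_def fold4)
      then show ?thesis using nF False Cons by (auto simp: slt_def dfa_lang_def)
    qed
  qed
qed

lemma state_le:
  assumes "is_dfa V {0..4} z0 Fin \<delta>" "L = dfa_lang V z0 Fin \<delta>"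
  shows "State V L \<le> 5"
proof -
  have "\<exists>Z z0 Fin \<delta>. is_dfa V Z z0 Fin \<delta> \<and> card Z = 5 \<and> L = dfa_lang V z0 Fin \<delta>"
    using assms by (intro exI[of _ "{0..4::nat}"]) auto
  then show ?thesis unfolding State_def by (rule Least_le)
qed

lemma SLT_sub: "SLT V 1 \<subseteq> REG_Z V 5"
proof
  fix L assume "L \<in> SLT V 1"
  then obtain B I E F where H: "B \<subseteq> {w \<in> lists V. length w = 1}" "I \<subseteq> {w \<in> lists V. length w = 1}"
      "E \<subseteq> {w \<in> lists V. length w = 1}" "F \<subseteq> {w \<in> lists V. length w \<le> 1 - 1}"
      "L = slt V 1 B I E F" unfolding SLT_def by blast
  let ?Fin = "{q. q = 0 \<and> [] \<in> F} \<union> {1,3::nat}"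
  have L: "L = dfa_lang V 0 ?Fin (dd B I E)" using slt_lang[OF H(4)] H(5) by simp
  have D: "is_dfa V {0..4} 0 ?Fin (dd B I E)"
    unfolding is_dfa_def using dd_range by auto
  have "L \<subseteq> lists V" using L by (auto simp: dfa_lang_def)
  moreover have "regular V L" unfolding regular_def using D L by blast
  moreover have "State V L \<le> 5" using state_le[OF D L] .
  ultimately show "L \<in> REG_Z V 5" by (simp add: REG_Z_def)
qed

definition ee :: "'a \<Rightarrow> nat \<Rightarrow> 'a \<Rightarrow> nat" where
  "ee a q x = (if x = a \<and> q < 2 then Suc q else 4)"

lemma ee4: "foldl (ee a) 4 w = 4"
  by (induction w) (auto simp: ee_def)

lemma ee_lang: "(foldl (ee a) 0 w = 2) = (w = [a,a])"
proof (cases w)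
  case Nil then show ?thesis by simp
next
  case (Cons x r)
  show ?thesis
  proof (cases r)
    case Nil then show ?thesis using Cons by (simp add: ee_def)
  next
    case (Cons y s)
    show ?thesis
    proof (cases s)
      case Nil then show ?thesis using Cons \<open>w = x # r\<close> by (simp add: ee_def)
    next
      case (Cons z t)
      have "foldl (ee a) 0 w = foldl (ee a) (ee a (ee a (ee a 0 x) y) z) t"
        using Cons \<open>r = y # s\<close> \<open>w = x # r\<close> by simp
      also have "ee a (ee a (ee a 0 x) y) z = 4" by (simp add: ee_def)
      finally have "foldl (ee a) 0 w = 4" by (simp only: ee4)
      then show ?thesis using Cons \<open>r = y # s\<close> \<open>w = x # r\<close> by simp
    qed
  qed
qed

lemma psubsetI_sketch: "A \<subseteq> B \<Longrightarrow> x \<in> B \<Longrightarrow> x \<notin> A \<Longrightarrow> A \<subset> B"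
  by blast

theorem mainTheorem7:
  fixes V :: "'a set"
  assumes "alphabet V"
  shows "SLT V 1 \<subset> REG_Z V 5"
proof -
  obtain a where a: "a \<in> V" using assms unfolding alphabet_def by blast
  let ?L = "{[a,a]}"
  have L: "?L = dfa_lang V 0 {2} (ee a)"
  proof (intro set_eqI iffI)
    fix w assume "w \<in> ?L" then show "w \<in> dfa_lang V 0 {2} (ee a)"
      using a ee_lang[of a w] by (simp add: dfa_lang_def)
  next
    fix w assume "w \<in> dfa_lang V 0 {2} (ee a)" then show "w \<in> ?L"
      using ee_lang[of a w] by (simp add: dfa_lang_def)
  qed
  have D: "is_dfa V {0..4} 0 {2} (ee a)" unfolding is_dfa_def by (auto simp: ee_def)
  have r: "regular V ?L" unfolding regular_def
    by (intro exI[of _ "{0..4}"] exI[of _ 0] exI[of _ "{2}"] exI[of _ "ee a"] conjI D L)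
  have inR: "?L \<in> REG_Z V 5"
    unfolding REG_Z_def using a r state_le[OF D L] by simp
  have nS: "?L \<notin> SLT V 1"
  proof
    assume "?L \<in> SLT V 1"
    then obtain B I E F where H1: "F \<subseteq> {w \<in> lists V. length w \<le> 1 - 1}"
      and H2: "?L = slt V 1 B I E F" unfolding SLT_def mem_Collect_eq by metis
    have "[a,a] \<in> ?L" by simp
    then have "[a,a] \<in> slt V 1 B I E F" by (simp only: H2)
    then have "[a] \<in> B" "[a] \<in> E" using H1 by (auto simp: slt_def)
    then have "[a] \<in> slt V 1 B I E F" using a by (auto simp: slt_def)
    then have "[a] \<in> ?L" by (simp only: H2)
    then show False by simp
  qed
  show ?thesis using SLT_sub[of V] inR nS by (rule psubsetI_sketch)
qed

end
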